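(* The linear subspace $\mathsf{CDUC}_d$ of linear maps on $\mathcal{M}_d(\mathbb{C})$ is stable under composition, but $\mathsf{DUC}_d$ is not. Moreover, for pairs $(A_1,B_1),(A_2,B_2)$ of $d\times d$ complex matrices with $\operatorname{diag}(A_k)=\operatorname{diag}(B_k)$, and for $i,j\in\{1,2\}$: if $i=j$ then $\Phi^{(i)}_{(A_1,B_1)}\circ\Phi^{(j)}_{(A_2,B_2)}=\Phi^{(2)}_{(\mathfrak A,\mathfrak B)}$, and if $i\ne j$ then $\Phi^{(i)}_{(A_1,B_1)}\circ\Phi^{(j)}_{(A_2,B_2)}=\Phi^{(1)}_{(\mathfrak A,\mathfrak B)}$, where in both cases $(\mathfrak A,\mathfrak B)=(A_1,B_1)\circ_i(A_2,B_2)$.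
   Context: $\mathcal{DU}_d$ is the group of diagonal unitary $d\times d$ matrices. A linear map $\Phi$ on $\mathcal{M}_d(\mathbb{C})$ is DUC if $\Phi(UXU^* )=U^*\Phi(X)U$ for all $X$ and $U\in\mathcal{DU}_d$, and CDUC if $\Phi(UXU^* )=U\Phi(X)U^*$; $\mathsf{DUC}_d$, $\mathsf{CDUC}_d$ are the sets of such maps. A set $K$ of maps is stable under composition if $\Phi_1\circ\Phi_2\in K$ for all $\Phi_1,\Phi_2\in K$. Notation: $\odot$ is entrywise product; $\operatorname{diag}B$ is the diagonal matrix with the diagonal of $B$, $\widetilde B=B-\operatorname{diag}B$, $|\operatorname{diag}X\rangle$ is the vector of diagonal entries of $X$ and $\operatorname{diag}(v)$ the diagonal matrix with diagonal $v$. For a pair $(A,B)$ with equal diagonals, $\Phi^{(1)}_{(A,B)}(X)=\operatorname{diag}(A|\operatorname{diag}X\rangle)+\widetilde B\odot X^\top$ and $\Phi^{(2)}_{(A,B)}(X)=\operatorname{diag}(A|\operatorname{diag}X\rangle)+\widetilde B\odot X$. The compositions are $(A_1,B_1)\circ_1(A_2,B_2)=(A_1A_2,\ B_1\odot B_2^\top+\operatorname{diag}(A_1A_2-B_1\odot B_2))$ and $(A_1,B_1)\circ_2(A_2,B_2)=(A_1A_2,\ B_1\odot B_2+\operatorname{diag}(A_1A_2-B_1\odot B_2))$. *)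

theory Defs
  imports "HOL-Analysis.Analysis"
begin

text \<open>d x d complex matrices are modelled as complex^'n^'n, with d = CARD('n).\<close>


definition mat_smult :: "complex \<Rightarrow> (complex^'n::finite^'n) \<Rightarrow> (complex^'n::finite^'n)" where
  "mat_smult c X = (\<chi> i j. c * X$i$j)"

definition mat_linear :: "((complex^'n::finite^'n) \<Rightarrow> (complex^'n::finite^'n)) \<Rightarrow> bool" where
  "mat_linear \<Phi> \<longleftrightarrow> (\<forall>X Y. \<Phi> (X + Y) = \<Phi> X + \<Phi> Y) \<and>
                     (\<forall>c X. \<Phi> (mat_smult c X) = mat_smult c (\<Phi> X))"

definition mat_adj :: "(complex^'n::finite^'n) \<Rightarrow> (complex^'n::finite^'n)" where
  "mat_adj U = (\<chi> i j. cnj (U$j$i))"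

definition diag_unitary :: "(complex^'n::finite^'n) \<Rightarrow> bool" where
  "diag_unitary U \<longleftrightarrow> (\<forall>i j. i \<noteq> j \<longrightarrow> U$i$j = 0) \<and> (\<forall>i. cmod (U$i$i) = 1)"

definition DUC :: "((complex^'n::finite^'n) \<Rightarrow> (complex^'n::finite^'n)) set" where
  "DUC = {\<Phi>. mat_linear \<Phi> \<and>
     (\<forall>U X. diag_unitary U \<longrightarrow> \<Phi> (U ** X ** mat_adj U) = mat_adj U ** \<Phi> X ** U)}"

definition CDUC :: "((complex^'n::finite^'n) \<Rightarrow> (complex^'n::finite^'n)) set" where
  "CDUC = {\<Phi>. mat_linear \<Phi> \<and>
     (\<forall>U X. diag_unitary U \<longrightarrow> \<Phi> (U ** X ** mat_adj U) = U ** \<Phi> X ** mat_adj U)}"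

definition comp_stable :: "('a \<Rightarrow> 'a) set \<Rightarrow> bool" where
  "comp_stable K \<longleftrightarrow> (\<forall>\<Phi>1\<in>K. \<forall>\<Phi>2\<in>K. \<Phi>1 \<circ> \<Phi>2 \<in> K)"

definition hadamard :: "(complex^'n::finite^'n) \<Rightarrow> (complex^'n::finite^'n) \<Rightarrow> (complex^'n::finite^'n)" (infixl "\<odot>" 70) where
  "A \<odot> B = (\<chi> i j. A$i$j * B$i$j)"

definition diag_part :: "(complex^'n::finite^'n) \<Rightarrow> (complex^'n::finite^'n)" where
  "diag_part B = (\<chi> i j. if i = j then B$i$j else 0)"

definition offdiag :: "(complex^'n::finite^'n) \<Rightarrow> (complex^'n::finite^'n)" where
  "offdiag B = B - diag_part B"

definition diag_vec :: "(complex^'n::finite^'n) \<Rightarrow> complex^'n" where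
  "diag_vec X = (\<chi> i. X$i$i)"

definition diag_of :: "complex^'n \<Rightarrow> (complex^'n::finite^'n)" where
  "diag_of v = (\<chi> i j. if i = j then v$i else 0)"

definition Phi1 :: "(complex^'n::finite^'n) \<Rightarrow> (complex^'n::finite^'n) \<Rightarrow> (complex^'n::finite^'n) \<Rightarrow> (complex^'n::finite^'n)" where
  "Phi1 A B X = diag_of (A *v diag_vec X) + offdiag B \<odot> transpose X"

definition Phi2 :: "(complex^'n::finite^'n) \<Rightarrow> (complex^'n::finite^'n) \<Rightarrow> (complex^'n::finite^'n) \<Rightarrow> (complex^'n::finite^'n)" where
  "Phi2 A B X = diag_of (A *v diag_vec X) + offdiag B \<odot> X"

definition Phi :: "nat \<Rightarrow> (complex^'n::finite^'n) \<times> (complex^'n::finite^'n) \<Rightarrow> (complex^'n::finite^'n) \<Rightarrow> (complex^'n::finite^'n)" where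
  "Phi i AB = (if i = 1 then Phi1 (fst AB) (snd AB) else Phi2 (fst AB) (snd AB))"

definition comp1 :: "(complex^'n::finite^'n) \<times> (complex^'n::finite^'n) \<Rightarrow> (complex^'n::finite^'n) \<times> (complex^'n::finite^'n) \<Rightarrow> (complex^'n::finite^'n) \<times> (complex^'n::finite^'n)" where
  "comp1 AB1 AB2 = (let (A1, B1) = AB1; (A2, B2) = AB2 in
     (A1 ** A2, B1 \<odot> transpose B2 + diag_part (A1 ** A2 - B1 \<odot> B2)))"

definition comp2 :: "(complex^'n::finite^'n) \<times> (complex^'n::finite^'n) \<Rightarrow> (complex^'n::finite^'n) \<times> (complex^'n::finite^'n) \<Rightarrow> (complex^'n::finite^'n) \<times> (complex^'n::finite^'n)" where
  "comp2 AB1 AB2 = (let (A1, B1) = AB1; (A2, B2) = AB2 in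
     (A1 ** A2, B1 \<odot> B2 + diag_part (A1 ** A2 - B1 \<odot> B2)))"

definition comp_idx :: "nat \<Rightarrow> (complex^'n::finite^'n) \<times> (complex^'n::finite^'n) \<Rightarrow> (complex^'n::finite^'n) \<times> (complex^'n::finite^'n) \<Rightarrow> (complex^'n::finite^'n) \<times> (complex^'n::finite^'n)" where
  "comp_idx i = (if i = 1 then comp1 else comp2)"

end

theory Submission
  imports Defs
begin


lemma Y_entry: "(Phi1 A B X)$a$b = (if a = b then (A *v diag_vec X)$a else B$a$b * X$b$a)"
  "(Phi2 A B X)$a$b = (if a = b then (A *v diag_vec X)$a else B$a$b * X$a$b)"
  by (auto simp: Phi1_def Phi2_def diag_of_def offdiag_def diag_part_def hadamard_def transpose_def)

lemma dv1: "diag_vec (Phi1 A B X) = A *v diag_vec X" "diag_vec (Phi2 A B X) = A *v diag_vec X"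
  by (auto simp: vec_eq_iff diag_vec_def Y_entry)




lemma t0: "Phi1 A1 B1 \<circ> Phi1 A2 B2 = Phi2 (A1 ** A2) (B1 \<odot> transpose B2 + C)"
  if c: "\<And>a b. a \<noteq> b \<Longrightarrow> C$a$b = 0"
  for C :: "complex^'n::finite^'n"
proof (rule ext, simp only: vec_eq_iff o_apply, intro allI)
  fix X a b
  show "(Phi1 A1 B1 (Phi1 A2 B2 X))$a$b = (Phi2 (A1 ** A2) (B1 \<odot> transpose B2 + C) X)$a$b"
  proof (cases "a = b")
    case True
    then show ?thesis apply (simp only: Y_entry dv1 if_True)
       by (simp add: matrix_vector_mul_assoc)
  next
    case False
    then show ?thesis using c[OF False] by (simp add: Y_entry hadamard_def transpose_def)
  qed
qed

lemma t1: "Phi1 A1 B1 \<circ> Phi2 A2 B2 = Phi1 (A1 ** A2) (B1 \<odot> transpose B2 + C)"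
  if c: "\<And>a b. a \<noteq> b \<Longrightarrow> C$a$b = 0"
  for C :: "complex^'n::finite^'n"
proof (rule ext, simp only: vec_eq_iff o_apply, intro allI)
  fix X a b
  show "(Phi1 A1 B1 (Phi2 A2 B2 X))$a$b = (Phi1 (A1 ** A2) (B1 \<odot> transpose B2 + C) X)$a$b"
  proof (cases "a = b")
    case True
    then show ?thesis apply (simp only: Y_entry dv1 if_True)
       by (simp add: matrix_vector_mul_assoc)
  next
    case False
    then show ?thesis using c[OF False] by (simp add: Y_entry hadamard_def transpose_def)
  qed
qed

lemma t2: "Phi2 A1 B1 \<circ> Phi1 A2 B2 = Phi1 (A1 ** A2) (B1 \<odot> B2 + C)"
  if c: "\<And>a b. a \<noteq> b \<Longrightarrow> C$a$b = 0"
  for C :: "complex^'n::finite^'n"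
proof (rule ext, simp only: vec_eq_iff o_apply, intro allI)
  fix X a b
  show "(Phi2 A1 B1 (Phi1 A2 B2 X))$a$b = (Phi1 (A1 ** A2) (B1 \<odot> B2 + C) X)$a$b"
  proof (cases "a = b")
    case True
    then show ?thesis apply (simp only: Y_entry dv1 if_True)
       by (simp add: matrix_vector_mul_assoc)
  next
    case False
    then show ?thesis using c[OF False] by (simp add: Y_entry hadamard_def transpose_def)
  qed
qed

lemma t3: "Phi2 A1 B1 \<circ> Phi2 A2 B2 = Phi2 (A1 ** A2) (B1 \<odot> B2 + C)"
  if c: "\<And>a b. a \<noteq> b \<Longrightarrow> C$a$b = 0"
  for C :: "complex^'n::finite^'n"
proof (rule ext, simp only: vec_eq_iff o_apply, intro allI)
  fix X a b
  show "(Phi2 A1 B1 (Phi2 A2 B2 X))$a$b = (Phi2 (A1 ** A2) (B1 \<odot> B2 + C) X)$a$b"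
  proof (cases "a = b")
    case True
    then show ?thesis apply (simp only: Y_entry dv1 if_True)
       by (simp add: matrix_vector_mul_assoc)
  next
    case False
    then show ?thesis using c[OF False] by (simp add: Y_entry hadamard_def transpose_def)
  qed
qed
lemma dpdp: "diag_part (diag_part M) = diag_part M"
  by (simp add: vec_eq_iff diag_part_def)

lemma diag_left: "(\<forall>i j. i \<noteq> j \<longrightarrow> D$i$j = 0) \<Longrightarrow> (D ** X)$a$b = D$a$a * X$a$b"
  unfolding matrix_matrix_mult_def
  by (simp, subst sum.remove[of _ a], auto)

lemma diag_right: "(\<forall>i j. i \<noteq> j \<longrightarrow> D$i$j = 0) \<Longrightarrow> (X ** D)$a$b = X$a$b * D$b$b"
  unfolding matrix_matrix_mult_def
  by (simp, subst sum.remove[of _ b], auto)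

lemma conjU: "diag_unitary U \<Longrightarrow> (U ** X ** mat_adj U)$a$b = U$a$a * X$a$b * cnj (U$b$b)"
  "diag_unitary U \<Longrightarrow> (mat_adj U ** X ** U)$a$b = cnj (U$a$a) * X$a$b * U$b$b"
  unfolding diag_unitary_def
  by (subst diag_right, auto simp: mat_adj_def diag_left)+

lemma cduc_stable: "comp_stable (CDUC :: ((complex^'n::finite^'n) \<Rightarrow> (complex^'n^'n)) set)"
  unfolding comp_stable_def CDUC_def mat_linear_def by auto


lemma duc_not: assumes "CARD('n::finite) \<ge> 2"
  shows "\<not> comp_stable (DUC :: ((complex^'n^'n) \<Rightarrow> (complex^'n^'n)) set)"
proof
  assume st: "comp_stable (DUC :: ((complex^'n^'n) \<Rightarrow> (complex^'n^'n)) set)"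
  obtain a b :: 'n where ab: "a \<noteq> b"
  proof -
    obtain a :: 'n where True by blast
    have "card (UNIV - {a}) \<ge> 1" using assms by (simp add: card_Diff_singleton)
    then obtain b where "b \<in> UNIV - {a}" by (metis card.empty ex_in_conv not_one_le_zero)
    then show ?thesis using that by blast
  qed
  have lin: "mat_linear (transpose :: (complex^'n^'n) \<Rightarrow> _)"
    unfolding mat_linear_def by (simp add: vec_eq_iff transpose_def mat_smult_def)
  have eq: "transpose (U ** X ** mat_adj U) = mat_adj U ** transpose X ** U"
    if du: "diag_unitary U" for U X :: "complex^'n^'n"
    by (simp add: vec_eq_iff transpose_def conjU[OF du])
  have tD: "(transpose :: (complex^'n^'n) \<Rightarrow> _) \<in> DUC"
    unfolding DUC_def using lin eq by blast
  hence "(transpose \<circ> transpose :: (complex^'n^'n) \<Rightarrow> _) \<in> DUC" using st unfolding comp_stable_def by blast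
  hence h: "\<And>U X. diag_unitary U \<Longrightarrow> (U ** X ** mat_adj U :: complex^'n^'n) = mat_adj U ** X ** U"
    unfolding DUC_def by auto
  define U :: "complex^'n^'n" where "U = (\<chi> p q. if p = q then (if p = a then \<i> else 1) else 0)"
  define X :: "complex^'n^'n" where "X = (\<chi> p q. if p = a \<and> q = b then 1 else 0)"
  have du: "diag_unitary U" unfolding diag_unitary_def U_def by auto
  have "(U ** X ** mat_adj U)$a$b = (mat_adj U ** X ** U)$a$b" using h[OF du] by simp
  hence "U$a$a * X$a$b * cnj (U$b$b) = cnj (U$a$a) * X$a$b * U$b$b" by (simp only: conjU[OF du])
  thus False using ab by (simp add: U_def X_def)
qed
theorem proposition4p4:
  fixes A1 B1 A2 B2 :: "complex^'n^'n" and i j :: nat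
  assumes "diag_part A1 = diag_part B1" and "diag_part A2 = diag_part B2"
    and "i \<in> {1, 2}" and "j \<in> {1, 2}"
  shows "comp_stable (CDUC :: ((complex^'n^'n) \<Rightarrow> (complex^'n^'n)) set)
    \<and> (CARD('n) \<ge> 2 \<longrightarrow> \<not> comp_stable (DUC :: ((complex^'n^'n) \<Rightarrow> (complex^'n^'n)) set))
    \<and> (i = j \<longrightarrow> Phi i (A1, B1) \<circ> Phi j (A2, B2) = Phi 2 (comp_idx i (A1, B1) (A2, B2)))
    \<and> (i \<noteq> j \<longrightarrow> Phi i (A1, B1) \<circ> Phi j (A2, B2) = Phi 1 (comp_idx i (A1, B1) (A2, B2)))"
proof -
  have c: "a \<noteq> b \<Longrightarrow> (diag_part M)$a$b = 0" for a b and M :: "complex^'n^'n"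
    by (simp add: diag_part_def)
  have p: "Phi i (A1, B1) \<circ> Phi j (A2, B2) = (if i = j then Phi 2 (comp_idx i (A1, B1) (A2, B2)) else Phi 1 (comp_idx i (A1, B1) (A2, B2)))"
    using assms(3,4) by (auto simp: Phi_def comp_idx_def comp1_def comp2_def t0 t1 t2 t3 c)
  show ?thesis using p cduc_stable duc_not by auto
qed

end
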